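(* Consider a mean-variance team stochastic game as described in the context. Let $\boldsymbol{\mu},\boldsymbol{\mu}'\in\mathcal{U}$ and define $\mathcal{L}_f^{\boldsymbol{\mu}}(\boldsymbol{\mu}')=\mathbb{E}_{s\sim\pi^{\boldsymbol{\mu}},\boldsymbol{a}\sim\boldsymbol{\mu}'(\cdot|s)}[A_f^{\boldsymbol{\mu}}(s,\boldsymbol{a})]$, $\mathcal{L}^{\boldsymbol{\mu}}(\boldsymbol{\mu}')=\mathbb{E}_{s\sim\pi^{\boldsymbol{\mu}},\boldsymbol{a}\sim\boldsymbol{\mu}'(\cdot|s)}[A^{\boldsymbol{\mu}}(s,\boldsymbol{a})]$, $\epsilon_f=\max_s|\mathbb{E}_{\boldsymbol{a}\sim\boldsymbol{\mu}'(\cdot|s)}[A_f^{\boldsymbol{\mu}}(s,\boldsymbol{a})]|$, $\epsilon_\eta=\max_s|\mathbb{E}_{\boldsymbol{a}\sim\boldsymbol{\mu}'(\cdot|s)}[A^{\boldsymbol{\mu}}(s,\boldsymbol{a})]|$, and $H=\max\big(0,\ \mathcal{L}^{\boldsymbol{\mu}}(\boldsymbol{\mu}')-2(\kappa^*-1)\epsilon_\eta D_{\mathrm{TV}}(\boldsymbol{\mu}',\boldsymbol{\mu}),\ -\mathcal{L}^{\boldsymbol{\mu}}(\boldsymbol{\mu}')-2(\kappa^*-1)\epsilon_\eta D_{\mathrm{TV}}(\boldsymbol{\mu}',\boldsymbol{\mu})\big)$. Then $$J(\boldsymbol{\mu}')-J(\boldsymbol{\mu})\ge\mathcal{L}_f^{\boldsymbol{\mu}}(\boldsymbol{\mu}')-2(\kappa^*-1)\epsilon_fD_{\mathrm{TV}}(\boldsymbol{\mu}',\boldsymbol{\mu})+\beta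 H^2 .$$
   Context: Game: finite agents $\mathcal{N}=\{1,\dots,N\}$, finite state space $\mathcal{S}$, finite action sets $\mathcal{A}_i$, $\mathcal{A}=\prod_i\mathcal{A}_i$, transition kernel $P(s'|s,\boldsymbol{a})$, common reward $r:\mathcal{S}\times\mathcal{A}\to\mathbb{R}$. Policies $\mu_i:\mathcal{S}\to\Delta(\mathcal{A}_i)$ (set $\mathcal{U}_i$); joint policies $\boldsymbol{\mu}\in\mathcal{U}=\prod_i\mathcal{U}_i$ with $\boldsymbol{\mu}(\boldsymbol{a}|s)=\prod_i\mu_i(a_i|s)$. Standing assumption: the chain $P^{\boldsymbol{\mu}}(s'|s)=\sum_{\boldsymbol{a}}\boldsymbol{\mu}(\boldsymbol{a}|s)P(s'|s,\boldsymbol{a})$ is ergodic for every $\boldsymbol{\mu}\in\mathcal{U}$, stationary distribution $\pi^{\boldsymbol{\mu}}$. $\eta^{\boldsymbol{\mu}}=\sum_s\pi^{\boldsymbol{\mu}}(s)\sum_{\boldsymbol{a}}\boldsymbol{\mu}(\boldsymbol{a}|s)r(s,\boldsymbol{a})$; $\zeta^{\boldsymbol{\mu}}=\sum_s\pi^{\boldsymbol{\mu}}(s)\sum_{\boldsymbol{a}}\boldsymbol{\mu}(\boldsymbol{a}|s)(r(s,\boldsymbol{a})-\eta^{\boldsymbol{\mu}})^2$; for fixed $\beta\ge0$, $J(\boldsymbol{\mu})=\eta^{\boldsymbol{\mu}}-\beta\zeta^{\boldsymbol{\mu}}$. For a per-step reward $g$ (either $g=r$ with average $\eta^{\boldsymbol{\mu}}$,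 or $g=f^{\boldsymbol{\mu}}$ with $f^{\boldsymbol{\mu}}(s,\boldsymbol{a})=r(s,\boldsymbol{a})-\beta(r(s,\boldsymbol{a})-\eta^{\boldsymbol{\mu}})^2$ and average $J(\boldsymbol{\mu})$), let $\bar g$ be its stationary average, $V$ a solution of $V(s)=\sum_{\boldsymbol{a}}\boldsymbol{\mu}(\boldsymbol{a}|s)g(s,\boldsymbol{a})-\bar g+\sum_{s'}P^{\boldsymbol{\mu}}(s'|s)V(s')$ (unique up to an additive constant), $Q(s,\boldsymbol{a})=g(s,\boldsymbol{a})-\bar g+\sum_{s'}P(s'|s,\boldsymbol{a})V(s')$ and advantage $Q-V$. $A^{\boldsymbol{\mu}}$ denotes this advantage for $g=r$ (average-reward advantage) and $A_f^{\boldsymbol{\mu}}$ for $g=f^{\boldsymbol{\mu}}$. $D_{\mathrm{TV}}(\boldsymbol{\mu}',\boldsymbol{\mu})=\mathbb{E}_{s\sim\pi^{\boldsymbol{\mu}}}\big[\tfrac12\sum_{\boldsymbol{a}}|\boldsymbol{\mu}'(\boldsymbol{a}|s)-\boldsymbol{\mu}(\boldsymbol{a}|s)|\big]$. $\kappa^{\boldsymbol{\mu}}$ is Kemeny's constant of the chain $P^{\boldsymbol{\mu}}$, taken as the trace of the fundamental matrix $(I-P^{\boldsymbol{\mu}}+\boldsymbol{e}\pi^{\boldsymbol{\mu}})^{-1}$ (equivalently $\sum_{s'}\pi^{\boldsymbol{\mu}}(s')m^{\boldsymbol{\mu}}(s,s')$ with $m^{\boldsymbol{\mu}}(s,s')$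 the mean first time $t\ge1$ to reach $s'$ from $s$), and $\kappa^*=\max_{\boldsymbol{\mu}\in\mathcal{U}}\kappa^{\boldsymbol{\mu}}$. *)

theory Defs
  imports "HOL-Analysis.Analysis"
begin

text \<open>Every agent draws its actions from a common finite type 'act, restricted to its own
  action set A i.
  P s a s' is the transition kernel, r s a the common reward.
  A (product) policy is mu :: 'i => 's => 'act => real, mu i s being a distribution on A i.\<close>

definition joint_actions :: "('i \<Rightarrow> 'act set) \<Rightarrow> ('i \<Rightarrow> 'act) set" where
  "joint_actions A = {a. \<forall>i. a i \<in> A i}"

definition valid_game ::
  "('i::finite \<Rightarrow> 'act::finite set) \<Rightarrow> ('s::finite \<Rightarrow> ('i \<Rightarrow> 'act) \<Rightarrow> 's \<Rightarrow> real) \<Rightarrow> bool" where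
  "valid_game A P \<longleftrightarrow> (\<forall>i. A i \<noteq> {}) \<and>
     (\<forall>s a s'. a \<in> joint_actions A \<longrightarrow> 0 \<le> P s a s') \<and>
     (\<forall>s a. a \<in> joint_actions A \<longrightarrow> (\<Sum>s'\<in>UNIV. P s a s') = 1)"

definition policies :: "('i::finite \<Rightarrow> 'act::finite set) \<Rightarrow> ('i \<Rightarrow> 's::finite \<Rightarrow> 'act \<Rightarrow> real) set" where
  "policies A = {mu. \<forall>i s. (\<forall>x. 0 \<le> mu i s x) \<and> (\<forall>x. x \<notin> A i \<longrightarrow> mu i s x = 0)
                        \<and> (\<Sum>x\<in>A i. mu i s x) = 1}"

definition jpol :: "('i::finite \<Rightarrow> 's \<Rightarrow> 'act \<Rightarrow> real) \<Rightarrow> 's \<Rightarrow> ('i \<Rightarrow> 'act) \<Rightarrow> real" where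
  "jpol mu s a = (\<Prod>i\<in>UNIV. mu i s (a i))"

definition Pmu :: "('s::finite \<Rightarrow> ('i::finite \<Rightarrow> 'act::finite) \<Rightarrow> 's \<Rightarrow> real)
     \<Rightarrow> ('i \<Rightarrow> 's \<Rightarrow> 'act \<Rightarrow> real) \<Rightarrow> 's \<Rightarrow> 's \<Rightarrow> real" where
  "Pmu P mu s s' = (\<Sum>a\<in>UNIV. jpol mu s a * P s a s')"

fun mpow :: "('s::finite \<Rightarrow> 's \<Rightarrow> real) \<Rightarrow> nat \<Rightarrow> 's \<Rightarrow> 's \<Rightarrow> real" where
  "mpow M 0 = (\<lambda>s s'. if s = s' then 1 else 0)"
| "mpow M (Suc n) = (\<lambda>s s'. \<Sum>t\<in>UNIV. mpow M n s t * M t s')"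

text \<open>Ergodic (finite chain, Kemeny--Snell sense): irreducible.\<close>
definition ergodic :: "('s::finite \<Rightarrow> 's \<Rightarrow> real) \<Rightarrow> bool" where
  "ergodic M \<longleftrightarrow> (\<forall>s s'. \<exists>n>0. mpow M n s s' > 0)"

definition is_stationary :: "('s::finite \<Rightarrow> 's \<Rightarrow> real) \<Rightarrow> ('s \<Rightarrow> real) \<Rightarrow> bool" where
  "is_stationary M p \<longleftrightarrow> (\<forall>s. 0 \<le> p s) \<and> (\<Sum>s\<in>UNIV. p s) = 1 \<and> (\<forall>s'. (\<Sum>s\<in>UNIV. p s * M s s') = p s')"

definition stat_dist :: "('s::finite \<Rightarrow> 's \<Rightarrow> real) \<Rightarrow> 's \<Rightarrow> real" where
  "stat_dist M = (THE p. is_stationary M p)"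

definition pi_mu where "pi_mu P mu = stat_dist (Pmu P mu)"

definition avg where
  "avg P mu g = (\<Sum>s\<in>UNIV. pi_mu P mu s * (\<Sum>a\<in>UNIV. jpol mu s a * g s a))"

definition eta where "eta P r mu = avg P mu r"

definition zeta where
  "zeta P r mu = avg P mu (\<lambda>s a. (r s a - eta P r mu)\<^sup>2)"

definition Jobj where "Jobj beta P r mu = eta P r mu - beta * zeta P r mu"

definition fmu where
  "fmu beta P r mu = (\<lambda>s a. r s a - beta * (r s a - eta P r mu)\<^sup>2)"

text \<open>relative value function: a solution of the Poisson equation (unique up to a constant)\<close>
definition Vfun where
  "Vfun P mu g gbar = (SOME V. \<forall>s. V s = (\<Sum>a\<in>UNIV. jpol mu s a * g s a) - gbar + (\<Sum>s'\<in>UNIV. Pmu P mu s s' * V s'))"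

definition Qfun where
  "Qfun P mu g gbar = (\<lambda>s a. g s a - gbar + (\<Sum>s'\<in>UNIV. P s a s' * Vfun P mu g gbar s'))"

definition advantage where
  "advantage P mu g gbar = (\<lambda>s a. Qfun P mu g gbar s a - Vfun P mu g gbar s)"

definition Adv :: "_ \<Rightarrow> _ \<Rightarrow> _ \<Rightarrow> 's::finite \<Rightarrow> ('i::finite \<Rightarrow> 'act::finite) \<Rightarrow> real" where
  "Adv P r mu = advantage P mu r (eta P r mu)"

definition Adv_f :: "real \<Rightarrow> _ \<Rightarrow> _ \<Rightarrow> _ \<Rightarrow> 's::finite \<Rightarrow> ('i::finite \<Rightarrow> 'act::finite) \<Rightarrow> real" where
  "Adv_f beta P r mu = advantage P mu (fmu beta P r mu) (Jobj beta P r mu)"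

definition DTV where
  "DTV P mu' mu = (\<Sum>s\<in>UNIV. pi_mu P mu s * (1/2 * (\<Sum>a\<in>UNIV. \<bar>jpol mu' s a - jpol mu s a\<bar>)))"

text \<open>Kemeny's constant: trace of the fundamental matrix (I - P + e pi)^{-1}\<close>
definition kemeny_chain :: "('s::finite \<Rightarrow> 's \<Rightarrow> real) \<Rightarrow> real" where
  "kemeny_chain M = trace (matrix_inv
     ((\<chi> i j. (if i = j then 1 else 0) - M i j + stat_dist M j) :: real^'s^'s))"

definition kemeny where "kemeny P mu = kemeny_chain (Pmu P mu)"

definition kemeny_star where
  "kemeny_star A P = (SUP mu\<in>policies A. kemeny P mu)"

definition surr where
  "surr P mu mu' Ad = (\<Sum>s\<in>UNIV. pi_mu P mu s * (\<Sum>a\<in>UNIV. jpol mu' s a * Ad s a))"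

definition epsmax :: "_ \<Rightarrow> ('s::finite \<Rightarrow> _ \<Rightarrow> real) \<Rightarrow> real" where
  "epsmax mu' Ad = Max (range (\<lambda>s. \<bar>\<Sum>a\<in>UNIV. jpol mu' s a * Ad s a\<bar>))"

end

theory Submission
  imports Defs "HOL-Library.FuncSet"
begin

definition stoch :: "('s::finite \<Rightarrow> 's \<Rightarrow> real) \<Rightarrow> bool" where
  "stoch M \<longleftrightarrow> (\<forall>i j. 0 \<le> M i j) \<and> (\<forall>i. (\<Sum>j\<in>UNIV. M i j) = 1)"

lemma ex_argmax: fixes x :: "'s::finite \<Rightarrow> real" shows "\<exists>i0. \<forall>j. x j \<le> x i0"
proof -
  have "Max (range x) \<in> range x" by (rule Max_in) auto
  then obtain i0 where i0: "Max (range x) = x i0" by (rule imageE)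
  have "x j \<le> x i0" for j
  proof -
    have "x j \<le> Max (range x)" by (rule Max_ge) auto
    then show ?thesis using i0 by simp
  qed
  then show ?thesis by blast
qed

lemma ex_argmin: fixes x :: "'s::finite \<Rightarrow> real" shows "\<exists>i0. \<forall>j. x i0 \<le> x j"
  using ex_argmax[of "\<lambda>i. - x i"] by auto

lemma mpow_nonneg: "(\<forall>i j. 0 \<le> M i j) \<Longrightarrow> 0 \<le> mpow M n i j"
  by (induction n arbitrary: j) (auto intro!: sum_nonneg)

lemma mpow_Suc_pos:
  assumes nn: "\<forall>i j. 0 \<le> M i j" and pos: "mpow M (Suc n) i j > 0"
  shows "\<exists>t. mpow M n i t > 0 \<and> M t j > 0"
proof (rule ccontr)
  assume "\<not> ?thesis"
  then have "\<forall>t. mpow M n i t * M t j \<le> 0"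
    using mpow_nonneg[OF nn, of n i] nn
    by (metis less_eq_real_def mult_eq_0_iff)
  then have "(\<Sum>t\<in>UNIV. mpow M n i t * M t j) \<le> 0" by (simp add: sum_nonpos)
  with pos show False by simp
qed

lemma reach_closed:
  assumes nn: "\<forall>i j. 0 \<le> M i j" and S0: "i0 \<in> S"
    and cl: "\<forall>i j. i \<in> S \<longrightarrow> M i j > 0 \<longrightarrow> j \<in> S"
  shows "mpow M n i0 j > 0 \<Longrightarrow> j \<in> S"
proof (induction n arbitrary: j)
  case 0
  then show ?case using S0 by (auto split: if_splits)
next
  case (Suc n)
  then obtain t where "mpow M n i0 t > 0" "M t j > 0" using mpow_Suc_pos[OF nn] by blast
  then show ?case using Suc.IH cl by blast
qed

lemma ergodic_closed:
  assumes nn: "\<forall>i j. 0 \<le> M i j" and erg: "ergodic M" and S0: "i0 \<in> S"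
    and cl: "\<forall>i j. i \<in> S \<longrightarrow> M i j > 0 \<longrightarrow> j \<in> S"
  shows "j \<in> S"
proof -
  obtain n where "mpow M n i0 j > 0" using erg unfolding ergodic_def by blast
  then show ?thesis using reach_closed[OF nn S0 cl] by blast
qed

lemma harmonic_const:
  assumes st: "stoch M" and erg: "ergodic M" and h: "\<forall>i. x i = (\<Sum>j\<in>UNIV. M i j * x j)"
  shows "x i = x j"
proof -
  have nn: "\<forall>i j. 0 \<le> M i j" and rs: "\<forall>i. (\<Sum>j\<in>UNIV. M i j) = 1" using st by (auto simp: stoch_def)
  obtain i0 where i0: "\<forall>j. x j \<le> x i0" using ex_argmax by blast
  let ?S = "{i. x i = x i0}"
  have cl: "\<forall>i j. i \<in> ?S \<longrightarrow> M i j > 0 \<longrightarrow> j \<in> ?S"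
  proof (intro allI impI, rule ccontr)
    fix i j assume iS: "i \<in> ?S" and Mp: "M i j > 0" and jn: "j \<notin> ?S"
    have xj: "x j < x i0" using i0[rule_format, of j] jn by simp
    have "(\<Sum>j'\<in>UNIV. M i j' * x j') < (\<Sum>j'\<in>UNIV. M i j' * x i0)"
    proof (rule sum_strict_mono_ex1)
      show "\<forall>j'\<in>UNIV. M i j' * x j' \<le> M i j' * x i0" using nn i0 by (simp add: mult_left_mono)
      show "\<exists>j'\<in>UNIV. M i j' * x j' < M i j' * x i0" using mult_strict_left_mono[OF xj Mp] by blast
    qed auto
    also have "\<dots> = x i0" using rs[rule_format, of i] by (simp only: sum_distrib_right[symmetric])
    finally have "(\<Sum>j'\<in>UNIV. M i j' * x j') < x i0" .
    moreover have "x i = x i0" using iS by simp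
    ultimately show False using h[rule_format, of i] by linarith
  qed
  have i0S: "i0 \<in> ?S" by simp
  have "i \<in> ?S" "j \<in> ?S" using ergodic_closed[OF nn erg i0S cl] by blast+
  then show ?thesis by simp
qed

lemma min_principle:
  assumes st: "stoch M" and erg: "ergodic M" and wk: "w k = 0" and c: "0 \<le> c"
    and h: "\<forall>i. i \<noteq> k \<longrightarrow> w i = c + (\<Sum>j\<in>UNIV. M i j * w j)"
  shows "0 \<le> w i"
proof (rule ccontr)
  assume neg: "\<not> 0 \<le> w i"
  have nn: "\<forall>i j. 0 \<le> M i j" and rs: "\<forall>i. (\<Sum>j\<in>UNIV. M i j) = 1" using st by (auto simp: stoch_def)
  obtain i0 where i0: "\<forall>j. w i0 \<le> w j" using ex_argmin by blast
  have wneg: "w i0 < 0" using neg i0 by (meson less_eq_real_def not_le order_trans)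
  let ?S = "{i. w i = w i0}"
  have cl: "\<forall>i j. i \<in> ?S \<longrightarrow> M i j > 0 \<longrightarrow> j \<in> ?S"
  proof (intro allI impI, rule ccontr)
    fix i j assume iS: "i \<in> ?S" and Mp: "M i j > 0" and jn: "j \<notin> ?S"
    have xj: "w j > w i0" using i0[rule_format, of j] jn by simp
    have ik: "i \<noteq> k" using iS wk wneg by auto
    have "(\<Sum>j'\<in>UNIV. M i j' * w i0) < (\<Sum>j'\<in>UNIV. M i j' * w j')"
    proof (rule sum_strict_mono_ex1)
      show "\<forall>j'\<in>UNIV. M i j' * w i0 \<le> M i j' * w j'" using nn i0 by (simp add: mult_left_mono)
      show "\<exists>j'\<in>UNIV. M i j' * w i0 < M i j' * w j'" using mult_strict_left_mono[OF xj Mp] by blast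
    qed auto
    moreover have "(\<Sum>j'\<in>UNIV. M i j' * w i0) = w i0" using rs[rule_format, of i] by (simp only: sum_distrib_right[symmetric])
    moreover have "w i = w i0" using iS by simp
    ultimately show False using h[rule_format, OF ik] c by linarith
  qed
  have i0S: "i0 \<in> ?S" by simp
  have "k \<in> ?S" using ergodic_closed[OF nn erg i0S cl] by blast
  then show False using wk wneg by simp
qed


definition vmat :: "('s::finite \<Rightarrow> 's \<Rightarrow> real) \<Rightarrow> real^'s^'s" where
  "vmat B = (\<chi> i j. B i j)"

lemma inv_of_ker:
  fixes B :: "'s::finite \<Rightarrow> 's \<Rightarrow> real"
  assumes "\<And>x. \<forall>i. (\<Sum>j\<in>UNIV. B i j * x j) = 0 \<Longrightarrow> \<forall>i. x i = 0"
  shows "invertible (vmat B)"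
proof -
  have "\<forall>x. vmat B *v x = 0 \<longrightarrow> x = 0"
  proof (intro allI impI)
    fix x :: "real^'s" assume "vmat B *v x = 0"
    then have "\<forall>i. (\<Sum>j\<in>UNIV. B i j * x$j) = 0" by (auto simp: vec_eq_iff matrix_vector_mult_def vmat_def)
    then have "\<forall>i. x$i = 0" using assms[of "\<lambda>j. x$j"] by blast
    then show "x = 0" by (simp add: vec_eq_iff)
  qed
  then show ?thesis using invertible_left_inverse matrix_left_invertible_ker by blast
qed

lemma inv_ker_left:
  fixes B :: "'s::finite \<Rightarrow> 's \<Rightarrow> real"
  assumes "invertible (vmat B)" "\<forall>j. (\<Sum>i\<in>UNIV. y i * B i j) = 0"
  shows "y i = 0"
proof -
  have "invertible (transpose (vmat B))" by (rule transpose_invertible[OF assms(1)])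
  then have ker: "\<forall>x. transpose (vmat B) *v x = 0 \<longrightarrow> x = 0"
    using invertible_left_inverse matrix_left_invertible_ker by blast
  have "transpose (vmat B) *v (\<chi> i. y i) = 0" using assms(2)
    by (simp add: vec_eq_iff matrix_vector_mult_def transpose_def vmat_def mult.commute)
  then have "(\<chi> i. y i) = (0::real^'s)" using ker by blast
  then show ?thesis by (metis vec_lambda_beta zero_index)
qed

lemma inv_ker_right:
  fixes B :: "'s::finite \<Rightarrow> 's \<Rightarrow> real"
  assumes "invertible (vmat B)" "\<forall>i. (\<Sum>j\<in>UNIV. B i j * x j) = 0"
  shows "x i = 0"
proof -
  have ker: "\<forall>x. vmat B *v x = 0 \<longrightarrow> x = 0"
    using assms(1) invertible_left_inverse matrix_left_invertible_ker by blast
  have "vmat B *v (\<chi> i. x i) = 0" using assms(2)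
    by (simp add: vec_eq_iff matrix_vector_mult_def vmat_def)
  then have "(\<chi> i. x i) = (0::real^'s)" using ker by blast
  then show ?thesis by (metis vec_lambda_beta zero_index)
qed

lemma noninv_left_ker:
  fixes B :: "'s::finite \<Rightarrow> 's \<Rightarrow> real"
  assumes "\<not> invertible (vmat B)"
  shows "\<exists>y. (\<exists>i. y i \<noteq> 0) \<and> (\<forall>j. (\<Sum>i\<in>UNIV. y i * B i j) = 0)"
proof -
  have "\<not> invertible (transpose (vmat B))" using assms transpose_invertible transpose_transpose by metis
  then obtain x where x: "transpose (vmat B) *v x = 0" "x \<noteq> 0"
    using invertible_left_inverse matrix_left_invertible_ker by blast
  have "\<exists>i. x$i \<noteq> 0" using x(2) by (simp add: vec_eq_iff)
  moreover have "\<forall>j. (\<Sum>i\<in>UNIV. x$i * B i j) = 0" using x(1)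
    by (simp add: vec_eq_iff matrix_vector_mult_def transpose_def vmat_def mult.commute)
  ultimately show ?thesis by blast
qed

lemma inv_mult:
  fixes B :: "'s::finite \<Rightarrow> 's \<Rightarrow> real"
  assumes "invertible (vmat B)"
  shows "(\<Sum>k\<in>UNIV. B i k * matrix_inv (vmat B) $ k $ j) = (if i = j then 1 else 0)"
    and "(\<Sum>k\<in>UNIV. matrix_inv (vmat B) $ i $ k * B k j) = (if i = j then 1 else 0)"
proof -
  have "vmat B ** matrix_inv (vmat B) = mat 1 \<and> matrix_inv (vmat B) ** vmat B = mat 1"
    using assms unfolding invertible_def matrix_inv_def by (rule someI_ex)
  then have 1: "(vmat B ** matrix_inv (vmat B)) $ i $ j = mat 1 $ i $ j"
    and 2: "(matrix_inv (vmat B) ** vmat B) $ i $ j = mat 1 $ i $ j" by simp_all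
  show "(\<Sum>k\<in>UNIV. B i k * matrix_inv (vmat B) $ k $ j) = (if i = j then 1 else 0)"
    using 1 by (simp add: matrix_matrix_mult_def mat_def vmat_def)
  show "(\<Sum>k\<in>UNIV. matrix_inv (vmat B) $ i $ k * B k j) = (if i = j then 1 else 0)"
    using 2 by (simp add: matrix_matrix_mult_def mat_def vmat_def)
qed

lemma rowB: fixes M :: "'s::finite \<Rightarrow> 's \<Rightarrow> real" shows "(\<Sum>j\<in>UNIV. ((if i = j then 1 else 0) - M i j + p j) * (x j::real))
   = x i - (\<Sum>j\<in>UNIV. M i j * x j) + (\<Sum>j\<in>UNIV. p j * x j)"
proof -
  have d: "(\<Sum>j\<in>UNIV. (if i = j then 1 else 0) * x j) = x i"
  proof -
    have "(\<Sum>j\<in>UNIV. (if i = j then 1 else 0) * x j) = (\<Sum>j\<in>UNIV. if i = j then x j else 0)" by (rule sum.cong) auto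
    then show ?thesis by simp
  qed
  show ?thesis by (simp only: distrib_right left_diff_distrib sum.distrib sum_subtractf d)
qed

lemma colB: fixes M :: "'s::finite \<Rightarrow> 's \<Rightarrow> real" shows "(\<Sum>i\<in>UNIV. (y i::real) * ((if i = j then 1 else 0) - M i j + p j))
   = y j - (\<Sum>i\<in>UNIV. y i * M i j) + (\<Sum>i\<in>UNIV. y i) * p j"
proof -
  have d: "(\<Sum>i\<in>UNIV. y i * (if i = j then 1 else 0)) = y j"
  proof -
    have "(\<Sum>i\<in>UNIV. y i * (if i = j then 1 else 0)) = (\<Sum>i\<in>UNIV. if i = j then y i else 0)" by (rule sum.cong) auto
    then show ?thesis by simp
  qed
  show ?thesis by (simp only: distrib_left right_diff_distrib sum.distrib sum_subtractf d sum_distrib_right)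
qed


lemma stoch_nn: "stoch M \<Longrightarrow> 0 \<le> M i j" by (simp add: stoch_def)
lemma stoch_rs: "stoch M \<Longrightarrow> (\<Sum>j\<in>UNIV. M i j) = 1" by (simp add: stoch_def)

lemma stat_exists:
  fixes M :: "'s::finite \<Rightarrow> 's \<Rightarrow> real"
  assumes st: "stoch M"
  shows "\<exists>p. is_stationary M p"
proof -
  define B where "B = (\<lambda>i j. (if i = j then 1 else 0) - M i j + (\<lambda>_. 0::real) j)"
  have ni: "\<not> invertible (vmat B)"
  proof
    assume inv: "invertible (vmat B)"
    have "\<forall>i. (\<Sum>j\<in>UNIV. B i j * 1) = 0"
    proof
      fix i
      show "(\<Sum>j\<in>UNIV. B i j * 1) = 0"
        unfolding B_def using stoch_rs[OF st, of i] by (simp add: sum_subtractf)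
    qed
    then have "(1::real) = 0" using inv_ker_right[OF inv, of "\<lambda>_. 1"] by blast
    then show False by simp
  qed
  obtain y where y0: "\<exists>i. y i \<noteq> 0" and yB: "\<forall>j. (\<Sum>i\<in>UNIV. y i * B i j) = 0"
    using noninv_left_ker[OF ni] by blast
  have yM: "y j = (\<Sum>i\<in>UNIV. y i * M i j)" for j
    using yB[rule_format, of j] colB[of y j M "\<lambda>_. 0"] unfolding B_def by simp
  define a where "a i = \<bar>y i\<bar>" for i
  have a_nn: "0 \<le> a i" for i by (simp add: a_def)
  have ale: "a j \<le> (\<Sum>i\<in>UNIV. a i * M i j)" for j
  proof -
    have "a j = \<bar>\<Sum>i\<in>UNIV. y i * M i j\<bar>" using yM[of j] by (simp add: a_def)
    also have "\<dots> \<le> (\<Sum>i\<in>UNIV. \<bar>y i * M i j\<bar>)" by (rule sum_abs)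
    also have "\<dots> = (\<Sum>i\<in>UNIV. a i * M i j)"
      by (rule sum.cong) (simp_all add: a_def abs_mult stoch_nn[OF st])
    finally show ?thesis .
  qed
  have swap: "(\<Sum>j\<in>UNIV. \<Sum>i\<in>UNIV. a i * M i j) = (\<Sum>i\<in>UNIV. a i)"
  proof -
    have "(\<Sum>j\<in>UNIV. \<Sum>i\<in>UNIV. a i * M i j) = (\<Sum>i\<in>UNIV. \<Sum>j\<in>UNIV. a i * M i j)"
      by (rule sum.swap)
    also have "\<dots> = (\<Sum>i\<in>UNIV. a i * (\<Sum>j\<in>UNIV. M i j))" by (simp add: sum_distrib_left)
    also have "\<dots> = (\<Sum>i\<in>UNIV. a i)" by (simp add: stoch_rs[OF st])
    finally show ?thesis .
  qed
  have "(\<Sum>j\<in>UNIV. (\<Sum>i\<in>UNIV. a i * M i j) - a j) = 0"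
    using swap by (simp add: sum_subtractf)
  then have eq: "(\<Sum>i\<in>UNIV. a i * M i j) = a j" for j
    using sum_nonneg_eq_0_iff[of UNIV "\<lambda>j. (\<Sum>i\<in>UNIV. a i * M i j) - a j"] ale by auto
  obtain i0 where "y i0 \<noteq> 0" using y0 by blast
  then have "0 < a i0" by (simp add: a_def)
  also have "a i0 \<le> (\<Sum>i\<in>UNIV. a i)" by (rule member_le_sum) (simp_all add: a_nn)
  finally have Spos: "0 < (\<Sum>i\<in>UNIV. a i)" .
  define S where "S = (\<Sum>i\<in>UNIV. a i)"
  have "is_stationary M (\<lambda>i. a i / S)"
    unfolding is_stationary_def
  proof (intro conjI allI)
    show "0 \<le> a s / S" for s using a_nn Spos S_def by simp
    show "(\<Sum>s\<in>UNIV. a s / S) = 1" using Spos S_def by (simp add: sum_divide_distrib[symmetric])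
    show "(\<Sum>s\<in>UNIV. a s / S * M s s') = a s' / S" for s'
    proof -
      have "(\<Sum>s\<in>UNIV. a s / S * M s s') = (\<Sum>s\<in>UNIV. a s * M s s') / S"
        by (simp add: sum_divide_distrib)
      then show ?thesis using eq[of s'] by simp
    qed
  qed
  then show ?thesis by blast
qed

definition Bm :: "('s::finite \<Rightarrow> 's \<Rightarrow> real) \<Rightarrow> ('s \<Rightarrow> real) \<Rightarrow> 's \<Rightarrow> 's \<Rightarrow> real" where
  "Bm M p = (\<lambda>i j. (if i = j then 1 else 0) - M i j + p j)"

lemma stat_swap:
  fixes M :: "'s::finite \<Rightarrow> 's \<Rightarrow> real"
  assumes "is_stationary M p"
  shows "(\<Sum>i\<in>UNIV. p i * (\<Sum>j\<in>UNIV. M i j * x j)) = (\<Sum>j\<in>UNIV. p j * x j)"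
proof -
  have "(\<Sum>i\<in>UNIV. p i * (\<Sum>j\<in>UNIV. M i j * x j)) = (\<Sum>i\<in>UNIV. \<Sum>j\<in>UNIV. p i * M i j * x j)"
    by (simp add: sum_distrib_left mult.assoc)
  also have "\<dots> = (\<Sum>j\<in>UNIV. \<Sum>i\<in>UNIV. p i * M i j * x j)" by (rule sum.swap)
  also have "\<dots> = (\<Sum>j\<in>UNIV. (\<Sum>i\<in>UNIV. p i * M i j) * x j)" by (simp add: sum_distrib_right)
  also have "\<dots> = (\<Sum>j\<in>UNIV. p j * x j)" using assms by (simp add: is_stationary_def)
  finally show ?thesis .
qed

lemma B_invertible:
  fixes M :: "'s::finite \<Rightarrow> 's \<Rightarrow> real"
  assumes st: "stoch M" and erg: "ergodic M" and p: "is_stationary M p"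
  shows "invertible (vmat (Bm M p))"
proof (rule inv_of_ker)
  fix x assume h: "\<forall>i. (\<Sum>j\<in>UNIV. Bm M p i j * x j) = 0"
  define c where "c = (\<Sum>j\<in>UNIV. p j * x j)"
  have row: "x i - (\<Sum>j\<in>UNIV. M i j * x j) + c = 0" for i
    using h[rule_format, of i] unfolding Bm_def rowB c_def .
  have psum: "(\<Sum>i\<in>UNIV. p i) = 1" using p by (simp add: is_stationary_def)
  have "(\<Sum>i\<in>UNIV. p i * (x i - (\<Sum>j\<in>UNIV. M i j * x j) + c)) = 0"
    by (rule sum.neutral) (simp add: row)
  moreover have "(\<Sum>i\<in>UNIV. p i * (x i - (\<Sum>j\<in>UNIV. M i j * x j) + c))
      = c - c + c"
    using stat_swap[OF p, of x] psum
    by (simp add: distrib_left right_diff_distrib sum.distrib sum_subtractf sum_distrib_right[symmetric] c_def)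
  ultimately have c0: "c = 0" by simp
  have harm: "\<forall>i. x i = (\<Sum>j\<in>UNIV. M i j * x j)"
  proof
    fix i show "x i = (\<Sum>j\<in>UNIV. M i j * x j)" using row[of i] c0 by linarith
  qed
  fix i0
  have const: "x i = x i0" for i using harmonic_const[OF st erg harm] .
  have "c = (\<Sum>j\<in>UNIV. p j * x i0)" unfolding c_def by (rule sum.cong[OF refl]) (metis const)
  also have "\<dots> = x i0" using psum by (simp add: sum_distrib_right[symmetric])
  finally have "x i0 = 0" using c0 by simp
  then show "\<forall>i. x i = 0" using const by simp
qed


lemma stat_unique:
  fixes M :: "'s::finite \<Rightarrow> 's \<Rightarrow> real"
  assumes st: "stoch M" and erg: "ergodic M" and p: "is_stationary M p" and q: "is_stationary M q"
  shows "q = p"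
proof
  fix i
  have inv: "invertible (vmat (Bm M p))" by (rule B_invertible[OF st erg p])
  have "\<forall>j. (\<Sum>i\<in>UNIV. (q i - p i) * Bm M p i j) = 0"
  proof
    fix j
    have s1: "(\<Sum>i\<in>UNIV. (q i - p i) * M i j) = q j - p j"
      using p q by (simp add: is_stationary_def left_diff_distrib sum_subtractf)
    have s2: "(\<Sum>i\<in>UNIV. (q i - p i)) = 0"
      using p q by (simp add: is_stationary_def sum_subtractf)
    show "(\<Sum>i\<in>UNIV. (q i - p i) * Bm M p i j) = 0"
      using colB[of "\<lambda>i. q i - p i" j M p] s1 s2 unfolding Bm_def by simp
  qed
  from inv_ker_left[OF inv this] show "q i = p i" by simp
qed

lemma stat_dist_eq:
  fixes M :: "'s::finite \<Rightarrow> 's \<Rightarrow> real"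
  assumes st: "stoch M" and erg: "ergodic M" and p: "is_stationary M p"
  shows "stat_dist M = p"
  unfolding stat_dist_def using p stat_unique[OF st erg p] by (rule the_equality)

lemma stat_dist_stat:
  fixes M :: "'s::finite \<Rightarrow> 's \<Rightarrow> real"
  assumes st: "stoch M" and erg: "ergodic M"
  shows "is_stationary M (stat_dist M)"
proof -
  obtain p where p: "is_stationary M p" using stat_exists[OF st] by blast
  then show ?thesis using stat_dist_eq[OF st erg p] by simp
qed

lemma sum_delta_mult:
  fixes f :: "'s::finite \<Rightarrow> real"
  shows "(\<Sum>i\<in>UNIV. f i * (if i = j then 1 else 0)) = f j"
proof -
  have "(\<Sum>i\<in>UNIV. f i * (if i = j then 1 else 0)) = (\<Sum>i\<in>UNIV. if i = j then f i else 0)"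
    by (rule sum.cong) auto
  then show ?thesis by simp
qed

definition Zf :: "('s::finite \<Rightarrow> 's \<Rightarrow> real) \<Rightarrow> 's \<Rightarrow> 's \<Rightarrow> real" where
  "Zf M = (\<lambda>i j. matrix_inv (vmat (Bm M (stat_dist M))) $ i $ j)"

lemma Z_BZ:
  fixes M :: "'s::finite \<Rightarrow> 's \<Rightarrow> real"
  assumes st: "stoch M" and erg: "ergodic M"
  shows "(\<Sum>k\<in>UNIV. Bm M (stat_dist M) i k * Zf M k j) = (if i = j then 1 else 0)"
  unfolding Zf_def by (rule inv_mult(1)[OF B_invertible[OF st erg stat_dist_stat[OF st erg]]])

lemma Z_ZB:
  fixes M :: "'s::finite \<Rightarrow> 's \<Rightarrow> real"
  assumes st: "stoch M" and erg: "ergodic M"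
  shows "(\<Sum>k\<in>UNIV. Zf M i k * Bm M (stat_dist M) k j) = (if i = j then 1 else 0)"
  unfolding Zf_def by (rule inv_mult(2)[OF B_invertible[OF st erg stat_dist_stat[OF st erg]]])

lemma Z_rowsum:
  fixes M :: "'s::finite \<Rightarrow> 's \<Rightarrow> real"
  assumes st: "stoch M" and erg: "ergodic M"
  shows "(\<Sum>j\<in>UNIV. Zf M i j) = 1"
proof -
  let ?p = "stat_dist M"
  have ps: "(\<Sum>j\<in>UNIV. ?p j) = 1" using stat_dist_stat[OF st erg] by (simp add: is_stationary_def)
  have Brs: "(\<Sum>j\<in>UNIV. Bm M ?p k j) = 1" for k
    using rowB[of k M ?p "\<lambda>_. 1"] stoch_rs[OF st, of k] ps unfolding Bm_def by simp
  have "1 = (\<Sum>j\<in>UNIV. (if i = j then 1 else (0::real)))" by simp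
  also have "\<dots> = (\<Sum>j\<in>UNIV. \<Sum>k\<in>UNIV. Zf M i k * Bm M ?p k j)"
    using Z_ZB[OF st erg] by simp
  also have "\<dots> = (\<Sum>k\<in>UNIV. \<Sum>j\<in>UNIV. Zf M i k * Bm M ?p k j)" by (rule sum.swap)
  also have "\<dots> = (\<Sum>k\<in>UNIV. Zf M i k * (\<Sum>j\<in>UNIV. Bm M ?p k j))" by (simp add: sum_distrib_left)
  also have "\<dots> = (\<Sum>k\<in>UNIV. Zf M i k)" by (simp add: Brs)
  finally show ?thesis by simp
qed

lemma Z_pi:
  fixes M :: "'s::finite \<Rightarrow> 's \<Rightarrow> real"
  assumes st: "stoch M" and erg: "ergodic M"
  shows "(\<Sum>i\<in>UNIV. stat_dist M i * Zf M i j) = stat_dist M j"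
proof -
  let ?p = "stat_dist M"
  have sp: "is_stationary M ?p" by (rule stat_dist_stat[OF st erg])
  have ps: "(\<Sum>j\<in>UNIV. ?p j) = 1" using sp by (simp add: is_stationary_def)
  have pB: "(\<Sum>i\<in>UNIV. ?p i * Bm M ?p i k) = ?p k" for k
    using colB[of ?p k M ?p] ps sp unfolding Bm_def by (simp add: is_stationary_def)
  have "?p j = (\<Sum>i\<in>UNIV. ?p i * (if i = j then 1 else 0))" by (simp add: sum_delta_mult)
  also have "\<dots> = (\<Sum>i\<in>UNIV. ?p i * (\<Sum>k\<in>UNIV. Bm M ?p i k * Zf M k j))"
    using Z_BZ[OF st erg] by simp
  also have "\<dots> = (\<Sum>i\<in>UNIV. \<Sum>k\<in>UNIV. ?p i * Bm M ?p i k * Zf M k j)"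
    by (simp add: sum_distrib_left mult.assoc)
  also have "\<dots> = (\<Sum>k\<in>UNIV. \<Sum>i\<in>UNIV. ?p i * Bm M ?p i k * Zf M k j)" by (rule sum.swap)
  also have "\<dots> = (\<Sum>k\<in>UNIV. (\<Sum>i\<in>UNIV. ?p i * Bm M ?p i k) * Zf M k j)"
    by (simp add: sum_distrib_right)
  also have "\<dots> = (\<Sum>k\<in>UNIV. ?p k * Zf M k j)" by (simp add: pB)
  finally show ?thesis by simp
qed

lemma Z_col:
  fixes M :: "'s::finite \<Rightarrow> 's \<Rightarrow> real"
  assumes st: "stoch M" and erg: "ergodic M"
  shows "Zf M i k = (if i = k then 1 else 0) - stat_dist M k + (\<Sum>j\<in>UNIV. M i j * Zf M j k)"
proof -
  have "(\<Sum>j\<in>UNIV. Bm M (stat_dist M) i j * Zf M j k) = (if i = k then 1 else 0)"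
    by (rule Z_BZ[OF st erg])
  then have "Zf M i k - (\<Sum>j\<in>UNIV. M i j * Zf M j k) + (\<Sum>j\<in>UNIV. stat_dist M j * Zf M j k)
      = (if i = k then 1 else 0)"
    using rowB[of i M "stat_dist M" "\<lambda>j. Zf M j k"] unfolding Bm_def by simp
  then show ?thesis using Z_pi[OF st erg, of k] by linarith
qed

lemma Z_diag:
  fixes M :: "'s::finite \<Rightarrow> 's \<Rightarrow> real"
  assumes st: "stoch M" and erg: "ergodic M"
  shows "Zf M i k \<le> Zf M k k"
proof -
  define w where "w i = Zf M k k - Zf M i k" for i
  have c: "0 \<le> stat_dist M k" using stat_dist_stat[OF st erg] by (simp add: is_stationary_def)
  have h: "\<forall>i. i \<noteq> k \<longrightarrow> w i = stat_dist M k + (\<Sum>j\<in>UNIV. M i j * w j)"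
  proof (intro allI impI)
    fix i assume ik: "i \<noteq> k"
    have "(\<Sum>j\<in>UNIV. M i j * w j) = (\<Sum>j\<in>UNIV. M i j) * Zf M k k - (\<Sum>j\<in>UNIV. M i j * Zf M j k)"
      unfolding w_def by (simp add: right_diff_distrib sum_subtractf sum_distrib_right)
    also have "\<dots> = Zf M k k - (\<Sum>j\<in>UNIV. M i j * Zf M j k)" using stoch_rs[OF st, of i] by simp
    finally show "w i = stat_dist M k + (\<Sum>j\<in>UNIV. M i j * w j)"
      using Z_col[OF st erg, of i k] ik unfolding w_def by simp
  qed
  have "0 \<le> w i" by (rule min_principle[OF st erg _ c h]) (simp add: w_def)
  then show ?thesis by (simp add: w_def)
qed

lemma kemeny_trace:
  fixes M :: "'s::finite \<Rightarrow> 's \<Rightarrow> real"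
  shows "kemeny_chain M = (\<Sum>k\<in>UNIV. Zf M k k)"
  unfolding kemeny_chain_def trace_def Zf_def Bm_def vmat_def by simp

lemma kemeny_row:
  fixes M :: "'s::finite \<Rightarrow> 's \<Rightarrow> real"
  assumes st: "stoch M" and erg: "ergodic M"
  shows "kemeny_chain M - 1 = (\<Sum>k\<in>UNIV. Zf M k k - Zf M i k)"
  using Z_rowsum[OF st erg, of i] by (simp add: kemeny_trace sum_subtractf)


lemma poisson_exists:
  fixes M :: "'s::finite \<Rightarrow> 's \<Rightarrow> real"
  assumes st: "stoch M" and erg: "ergodic M" and h0: "(\<Sum>i\<in>UNIV. stat_dist M i * h i) = 0"
  shows "\<exists>V. \<forall>s. V s = h s + (\<Sum>s'\<in>UNIV. M s s' * V s')"
proof -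
  let ?p = "stat_dist M"
  define V where "V i = (\<Sum>j\<in>UNIV. Zf M i j * h j)" for i
  have pV: "(\<Sum>k\<in>UNIV. ?p k * V k) = 0"
  proof -
    have "(\<Sum>k\<in>UNIV. ?p k * V k) = (\<Sum>k\<in>UNIV. \<Sum>j\<in>UNIV. ?p k * Zf M k j * h j)"
      unfolding V_def by (simp add: sum_distrib_left mult.assoc)
    also have "\<dots> = (\<Sum>j\<in>UNIV. \<Sum>k\<in>UNIV. ?p k * Zf M k j * h j)" by (rule sum.swap)
    also have "\<dots> = (\<Sum>j\<in>UNIV. (\<Sum>k\<in>UNIV. ?p k * Zf M k j) * h j)" by (simp add: sum_distrib_right)
    also have "\<dots> = (\<Sum>j\<in>UNIV. ?p j * h j)" by (simp add: Z_pi[OF st erg])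
    finally show ?thesis using h0 by simp
  qed
  have BV: "(\<Sum>k\<in>UNIV. Bm M ?p i k * V k) = h i" for i
  proof -
    have "(\<Sum>k\<in>UNIV. Bm M ?p i k * V k) = (\<Sum>k\<in>UNIV. \<Sum>j\<in>UNIV. Bm M ?p i k * Zf M k j * h j)"
      unfolding V_def by (simp add: sum_distrib_left mult.assoc)
    also have "\<dots> = (\<Sum>j\<in>UNIV. \<Sum>k\<in>UNIV. Bm M ?p i k * Zf M k j * h j)" by (rule sum.swap)
    also have "\<dots> = (\<Sum>j\<in>UNIV. (\<Sum>k\<in>UNIV. Bm M ?p i k * Zf M k j) * h j)" by (simp add: sum_distrib_right)
    also have "\<dots> = (\<Sum>j\<in>UNIV. (if i = j then 1 else 0) * h j)" by (simp only: Z_BZ[OF st erg])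
    also have "\<dots> = h i" using sum_delta_mult[of h i] by (simp add: mult.commute eq_commute)
    finally show ?thesis .
  qed
  have "\<forall>s. V s = h s + (\<Sum>s'\<in>UNIV. M s s' * V s')"
  proof
    fix s
    have "V s - (\<Sum>j\<in>UNIV. M s j * V j) + (\<Sum>j\<in>UNIV. ?p j * V j) = h s"
      using BV[of s] rowB[of s M ?p V] unfolding Bm_def by simp
    then show "V s = h s + (\<Sum>s'\<in>UNIV. M s s' * V s')" using pV by linarith
  qed
  then show ?thesis by blast
qed

lemma perturb:
  fixes M M' :: "'s::finite \<Rightarrow> 's \<Rightarrow> real"
  assumes st: "stoch M" and erg: "ergodic M" and st': "stoch M'" and erg': "ergodic M'"
    and G: "\<forall>s. \<bar>G s\<bar> \<le> eps"
  shows "\<bar>(\<Sum>s\<in>UNIV. stat_dist M' s * G s) - (\<Sum>s\<in>UNIV. stat_dist M s * G s)\<bar>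
     \<le> (\<Sum>j\<in>UNIV. \<bar>\<Sum>i\<in>UNIV. stat_dist M i * (M' i j - M i j)\<bar>) * ((kemeny_chain M' - 1) * eps)"
proof -
  let ?p = "stat_dist M" and ?q = "stat_dist M'"
  define x where "x j = (\<Sum>i\<in>UNIV. ?p i * (M' i j - M i j))" for j
  have sp: "is_stationary M ?p" by (rule stat_dist_stat[OF st erg])
  have sq: "is_stationary M' ?q" by (rule stat_dist_stat[OF st' erg'])
  have ps: "(\<Sum>j\<in>UNIV. ?p j) = 1" using sp by (simp add: is_stationary_def)
  have pM: "(\<Sum>i\<in>UNIV. ?p i * M i j) = ?p j" for j using sp by (simp add: is_stationary_def)
  have x_alt: "x j = ?q j - (\<Sum>i\<in>UNIV. ?p i * Bm M' ?q i j)" for j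
  proof -
    have "(\<Sum>i\<in>UNIV. ?p i * Bm M' ?q i j) = ?p j - (\<Sum>i\<in>UNIV. ?p i * M' i j) + ?q j"
      using colB[of ?p j M' ?q] ps unfolding Bm_def by simp
    moreover have "x j = (\<Sum>i\<in>UNIV. ?p i * M' i j) - ?p j"
      unfolding x_def using pM[of j] by (simp add: right_diff_distrib sum_subtractf)
    ultimately show ?thesis by linarith
  qed
  have xZ: "(\<Sum>j\<in>UNIV. x j * Zf M' j k) = ?q k - ?p k" for k
  proof -
    have "(\<Sum>j\<in>UNIV. x j * Zf M' j k)
        = (\<Sum>j\<in>UNIV. ?q j * Zf M' j k) - (\<Sum>j\<in>UNIV. (\<Sum>i\<in>UNIV. ?p i * Bm M' ?q i j) * Zf M' j k)"
      unfolding x_alt by (simp add: left_diff_distrib sum_subtractf)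
    also have "(\<Sum>j\<in>UNIV. (\<Sum>i\<in>UNIV. ?p i * Bm M' ?q i j) * Zf M' j k)
        = (\<Sum>j\<in>UNIV. \<Sum>i\<in>UNIV. ?p i * Bm M' ?q i j * Zf M' j k)" by (simp add: sum_distrib_right)
    also have "\<dots> = (\<Sum>i\<in>UNIV. \<Sum>j\<in>UNIV. ?p i * Bm M' ?q i j * Zf M' j k)" by (rule sum.swap)
    also have "\<dots> = (\<Sum>i\<in>UNIV. ?p i * (\<Sum>j\<in>UNIV. Bm M' ?q i j * Zf M' j k))"
      by (simp add: sum_distrib_left mult.assoc)
    also have "\<dots> = (\<Sum>i\<in>UNIV. ?p i * (if i = k then 1 else 0))" by (simp only: Z_BZ[OF st' erg'])
    also have "\<dots> = ?p k" by (rule sum_delta_mult)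
    finally show ?thesis using Z_pi[OF st' erg', of k] by simp
  qed
  have xs: "(\<Sum>j\<in>UNIV. x j) = 0"
  proof -
    have "(\<Sum>j\<in>UNIV. x j) = (\<Sum>i\<in>UNIV. \<Sum>j\<in>UNIV. ?p i * (M' i j - M i j))"
      unfolding x_def by (rule sum.swap)
    also have "\<dots> = (\<Sum>i\<in>UNIV. ?p i * ((\<Sum>j\<in>UNIV. M' i j) - (\<Sum>j\<in>UNIV. M i j)))"
      by (rule sum.cong[OF refl]) (simp add: sum_distrib_left[symmetric] sum_subtractf)
    also have "\<dots> = 0" by (simp add: stoch_rs[OF st] stoch_rs[OF st'])
    finally show ?thesis .
  qed
  define T where "T j = (\<Sum>k\<in>UNIV. (Zf M' j k - Zf M' k k) * G k)" for j
  define C where "C = (\<Sum>k\<in>UNIV. Zf M' k k * G k)"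
  have "(\<Sum>s\<in>UNIV. ?q s * G s) - (\<Sum>s\<in>UNIV. ?p s * G s) = (\<Sum>k\<in>UNIV. (?q k - ?p k) * G k)"
    by (simp add: left_diff_distrib sum_subtractf)
  also have "\<dots> = (\<Sum>k\<in>UNIV. \<Sum>j\<in>UNIV. x j * Zf M' j k * G k)"
    by (simp add: xZ[symmetric] sum_distrib_right)
  also have "\<dots> = (\<Sum>j\<in>UNIV. \<Sum>k\<in>UNIV. x j * Zf M' j k * G k)" by (rule sum.swap)
  also have "\<dots> = (\<Sum>j\<in>UNIV. x j * (T j + C))"
    unfolding T_def C_def
    by (simp add: sum_distrib_left mult.assoc left_diff_distrib sum_subtractf)
  also have "\<dots> = (\<Sum>j\<in>UNIV. x j * T j) + (\<Sum>j\<in>UNIV. x j) * C"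
    by (simp add: distrib_left sum.distrib sum_distrib_right)
  also have "\<dots> = (\<Sum>j\<in>UNIV. x j * T j)" using xs by simp
  finally have eq: "(\<Sum>s\<in>UNIV. ?q s * G s) - (\<Sum>s\<in>UNIV. ?p s * G s) = (\<Sum>j\<in>UNIV. x j * T j)" .
  have Tb: "\<bar>T j\<bar> \<le> (kemeny_chain M' - 1) * eps" for j
  proof -
    have "\<bar>T j\<bar> \<le> (\<Sum>k\<in>UNIV. \<bar>(Zf M' j k - Zf M' k k) * G k\<bar>)" unfolding T_def by (rule sum_abs)
    also have "\<dots> \<le> (\<Sum>k\<in>UNIV. (Zf M' k k - Zf M' j k) * eps)"
    proof (rule sum_mono)
      fix k
      have "0 \<le> Zf M' k k - Zf M' j k" using Z_diag[OF st' erg', of j k] by simp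
      then show "\<bar>(Zf M' j k - Zf M' k k) * G k\<bar> \<le> (Zf M' k k - Zf M' j k) * eps"
        using G[rule_format, of k] by (simp add: abs_mult mult_left_mono abs_minus_commute)
    qed
    also have "\<dots> = (kemeny_chain M' - 1) * eps"
      by (simp add: kemeny_row[OF st' erg', of j] sum_distrib_right)
    finally show ?thesis .
  qed
  have "\<bar>\<Sum>j\<in>UNIV. x j * T j\<bar> \<le> (\<Sum>j\<in>UNIV. \<bar>x j\<bar> * ((kemeny_chain M' - 1) * eps))"
  proof -
    have "\<bar>\<Sum>j\<in>UNIV. x j * T j\<bar> \<le> (\<Sum>j\<in>UNIV. \<bar>x j * T j\<bar>)" by (rule sum_abs)
    also have "\<dots> \<le> (\<Sum>j\<in>UNIV. \<bar>x j\<bar> * ((kemeny_chain M' - 1) * eps))"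
      by (rule sum_mono) (simp add: abs_mult Tb mult_left_mono)
    finally show ?thesis .
  qed
  then show ?thesis using eq by (simp add: x_def sum_distrib_right)
qed


section \<open>Game-specific facts\<close>

lemma pol_nn: "mu \<in> policies A \<Longrightarrow> 0 \<le> mu i s x"
  by (simp add: policies_def)

lemma jpol_nn: "mu \<in> policies A \<Longrightarrow> 0 \<le> jpol mu s a"
  unfolding jpol_def by (rule prod_nonneg) (simp add: pol_nn)

lemma jpol_zero:
  assumes "mu \<in> policies A" "a \<notin> joint_actions A"
  shows "jpol mu s a = 0"
proof -
  obtain i where "a i \<notin> A i" using assms(2) by (auto simp: joint_actions_def)
  then have "mu i s (a i) = 0" using assms(1) by (simp add: policies_def)
  then show ?thesis unfolding jpol_def by (intro prod_zero) auto
qed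

lemma pol_sum:
  fixes mu :: "'i::finite \<Rightarrow> 's::finite \<Rightarrow> 'act::finite \<Rightarrow> real"
  assumes "mu \<in> policies A"
  shows "(\<Sum>x\<in>UNIV. mu i s x) = 1"
proof -
  have "(\<Sum>x\<in>UNIV. mu i s x) = (\<Sum>x\<in>A i. mu i s x)"
    using assms by (intro sum.mono_neutral_right) (auto simp: policies_def)
  also have "\<dots> = 1" using assms by (simp add: policies_def)
  finally show ?thesis .
qed

lemma jpol_sum:
  fixes mu :: "'i::finite \<Rightarrow> 's::finite \<Rightarrow> 'act::finite \<Rightarrow> real"
  assumes "mu \<in> policies A"
  shows "(\<Sum>a\<in>UNIV. jpol mu s a) = 1"
proof -
  have "(\<Prod>i\<in>UNIV. \<Sum>x\<in>UNIV. mu i s x) = (\<Sum>a\<in>PiE UNIV (\<lambda>_. UNIV). \<Prod>i\<in>UNIV. mu i s (a i))"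
    by (rule prod_sum_PiE) auto
  then have "(\<Sum>a\<in>UNIV. jpol mu s a) = (\<Prod>i\<in>UNIV. \<Sum>x\<in>UNIV. mu i s x)"
    by (simp add: jpol_def)
  also have "\<dots> = 1" using pol_sum[OF assms] by simp
  finally show ?thesis .
qed

lemma jpol_P_nn:
  assumes game: "valid_game A P" and mu: "mu \<in> policies A"
  shows "0 \<le> jpol mu s a * P s a s'"
proof (cases "a \<in> joint_actions A")
  case True
  then show ?thesis using game jpol_nn[OF mu] by (simp add: valid_game_def)
next
  case False
  then show ?thesis using jpol_zero[OF mu False] by simp
qed

lemma jpol_Psum:
  fixes A :: "'i::finite \<Rightarrow> 'act::finite set" and P :: "'s::finite \<Rightarrow> ('i \<Rightarrow> 'act) \<Rightarrow> 's \<Rightarrow> real"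
  assumes game: "valid_game A P" and mu: "mu \<in> policies A"
  shows "jpol mu s a * (\<Sum>s'\<in>UNIV. P s a s') = jpol mu s a"
proof (cases "a \<in> joint_actions A")
  case True
  then show ?thesis using game by (simp add: valid_game_def)
next
  case False
  then show ?thesis using jpol_zero[OF mu False] by simp
qed

lemma Pmu_stoch:
  fixes A :: "'i::finite \<Rightarrow> 'act::finite set" and P :: "'s::finite \<Rightarrow> ('i \<Rightarrow> 'act) \<Rightarrow> 's \<Rightarrow> real"
  assumes game: "valid_game A P" and mu: "mu \<in> policies A"
  shows "stoch (Pmu P mu)"
  unfolding stoch_def
proof (intro conjI allI)
  show "0 \<le> Pmu P mu i j" for i j
    unfolding Pmu_def by (rule sum_nonneg) (rule jpol_P_nn[OF game mu])
  show "(\<Sum>j\<in>UNIV. Pmu P mu i j) = 1" for i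
  proof -
    have "(\<Sum>j\<in>UNIV. Pmu P mu i j) = (\<Sum>a\<in>UNIV. \<Sum>j\<in>UNIV. jpol mu i a * P i a j)"
      unfolding Pmu_def by (rule sum.swap)
    also have "\<dots> = (\<Sum>a\<in>UNIV. jpol mu i a * (\<Sum>j\<in>UNIV. P i a j))" by (simp add: sum_distrib_left)
    also have "\<dots> = (\<Sum>a\<in>UNIV. jpol mu i a)" by (simp add: jpol_Psum[OF game mu])
    also have "\<dots> = 1" by (rule jpol_sum[OF mu])
    finally show ?thesis .
  qed
qed

lemma pi_stat:
  assumes game: "valid_game A P" and erg: "\<forall>nu\<in>policies A. ergodic (Pmu P nu)" and mu: "mu \<in> policies A"
  shows "is_stationary (Pmu P mu) (pi_mu P mu)"
  unfolding pi_mu_def using stat_dist_stat[OF Pmu_stoch[OF game mu]] erg mu by blast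

lemma pi_sum:
  assumes game: "valid_game A P" and erg: "\<forall>nu\<in>policies A. ergodic (Pmu P nu)" and mu: "mu \<in> policies A"
  shows "(\<Sum>s\<in>UNIV. pi_mu P mu s) = 1"
  using pi_stat[OF game erg mu] by (simp add: is_stationary_def)

lemma pdl:
  fixes A :: "'i::finite \<Rightarrow> 'act::finite set" and P :: "'s::finite \<Rightarrow> ('i \<Rightarrow> 'act) \<Rightarrow> 's \<Rightarrow> real"
  assumes game: "valid_game A P" and erg: "\<forall>nu\<in>policies A. ergodic (Pmu P nu)"
    and mu: "mu \<in> policies A" and mu': "mu' \<in> policies A"
    and gb: "gbar = avg P mu g"
  shows "avg P mu' g - gbar
     = (\<Sum>s\<in>UNIV. pi_mu P mu' s * (\<Sum>a\<in>UNIV. jpol mu' s a * advantage P mu g gbar s a))"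
proof -
  let ?M = "Pmu P mu" and ?M' = "Pmu P mu'"
  have st: "stoch ?M" by (rule Pmu_stoch[OF game mu])
  have eg: "ergodic ?M" using erg mu by blast
  define h where "h s = (\<Sum>a\<in>UNIV. jpol mu s a * g s a) - gbar" for s
  have h0: "(\<Sum>i\<in>UNIV. stat_dist ?M i * h i) = 0"
  proof -
    have "(\<Sum>i\<in>UNIV. stat_dist ?M i * h i)
       = avg P mu g - (\<Sum>i\<in>UNIV. pi_mu P mu i) * gbar"
      unfolding h_def avg_def pi_mu_def by (simp add: right_diff_distrib sum_subtractf sum_distrib_right)
    then show ?thesis using pi_sum[OF game erg mu] gb by simp
  qed
  obtain V0 where "\<forall>s. V0 s = h s + (\<Sum>s'\<in>UNIV. ?M s s' * V0 s')"
    using poisson_exists[OF st eg h0] by blast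
  then have "\<exists>V. \<forall>s. V s = (\<Sum>a\<in>UNIV. jpol mu s a * g s a) - gbar + (\<Sum>s'\<in>UNIV. ?M s s' * V s')"
    unfolding h_def by blast
  then have V: "\<forall>s. Vfun P mu g gbar s = (\<Sum>a\<in>UNIV. jpol mu s a * g s a) - gbar
      + (\<Sum>s'\<in>UNIV. ?M s s' * Vfun P mu g gbar s')"
    unfolding Vfun_def by (rule someI_ex)
  define V where "V = Vfun P mu g gbar"
  have js: "(\<Sum>a\<in>UNIV. jpol mu' s a) = 1" for s by (rule jpol_sum[OF mu'])
  have Gs: "(\<Sum>a\<in>UNIV. jpol mu' s a * advantage P mu g gbar s a)
     = (\<Sum>a\<in>UNIV. jpol mu' s a * g s a) - gbar + (\<Sum>s'\<in>UNIV. ?M' s s' * V s') - V s" for s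
  proof -
    have e1: "(\<Sum>a\<in>UNIV. jpol mu' s a * (\<Sum>s'\<in>UNIV. P s a s' * V s')) = (\<Sum>s'\<in>UNIV. ?M' s s' * V s')"
    proof -
      have "(\<Sum>a\<in>UNIV. jpol mu' s a * (\<Sum>s'\<in>UNIV. P s a s' * V s'))
          = (\<Sum>a\<in>UNIV. \<Sum>s'\<in>UNIV. jpol mu' s a * P s a s' * V s')"
        by (simp add: sum_distrib_left mult.assoc)
      also have "\<dots> = (\<Sum>s'\<in>UNIV. \<Sum>a\<in>UNIV. jpol mu' s a * P s a s' * V s')" by (rule sum.swap)
      also have "\<dots> = (\<Sum>s'\<in>UNIV. ?M' s s' * V s')" by (simp add: Pmu_def sum_distrib_right)
      finally show ?thesis .
    qed
    have "(\<Sum>a\<in>UNIV. jpol mu' s a * advantage P mu g gbar s a)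
       = (\<Sum>a\<in>UNIV. jpol mu' s a * g s a) - (\<Sum>a\<in>UNIV. jpol mu' s a) * gbar
         + (\<Sum>a\<in>UNIV. jpol mu' s a * (\<Sum>s'\<in>UNIV. P s a s' * V s')) - (\<Sum>a\<in>UNIV. jpol mu' s a) * V s"
      unfolding advantage_def Qfun_def V_def
      by (simp add: algebra_simps sum.distrib sum_subtractf sum_distrib_right sum_distrib_left)
    then show ?thesis using e1 js by simp
  qed
  have sq: "is_stationary ?M' (pi_mu P mu')" by (rule pi_stat[OF game erg mu'])
  have ps': "(\<Sum>s\<in>UNIV. pi_mu P mu' s) = 1" using sq by (simp add: is_stationary_def)
  have "(\<Sum>s\<in>UNIV. pi_mu P mu' s * (\<Sum>a\<in>UNIV. jpol mu' s a * advantage P mu g gbar s a))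
     = avg P mu' g - (\<Sum>s\<in>UNIV. pi_mu P mu' s) * gbar
       + (\<Sum>s\<in>UNIV. pi_mu P mu' s * (\<Sum>s'\<in>UNIV. ?M' s s' * V s')) - (\<Sum>s\<in>UNIV. pi_mu P mu' s * V s)"
    unfolding Gs avg_def by (simp add: algebra_simps sum.distrib sum_subtractf sum_distrib_right sum_distrib_left)
  also have "\<dots> = avg P mu' g - gbar" using stat_swap[OF sq, of V] ps' by simp
  finally show ?thesis by simp
qed


lemma avg_lin:
  fixes A :: "'i::finite \<Rightarrow> 'act::finite set" and P :: "'s::finite \<Rightarrow> ('i \<Rightarrow> 'act) \<Rightarrow> 's \<Rightarrow> real"
  assumes game: "valid_game A P" and erg: "\<forall>nu\<in>policies A. ergodic (Pmu P nu)" and mu: "mu \<in> policies A"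
  shows "avg P mu (\<lambda>s a. f s a + c * g s a + d) = avg P mu f + c * avg P mu g + d"
proof -
  have js: "(\<Sum>a\<in>UNIV. jpol mu s a) = 1" for s by (rule jpol_sum[OF mu])
  have ps: "(\<Sum>s\<in>UNIV. pi_mu P mu s) = 1" by (rule pi_sum[OF game erg mu])
  have "avg P mu (\<lambda>s a. f s a + c * g s a + d)
     = avg P mu f + c * avg P mu g + (\<Sum>s\<in>UNIV. pi_mu P mu s * ((\<Sum>a\<in>UNIV. jpol mu s a) * d))"
    unfolding avg_def
    by (simp add: distrib_left sum.distrib sum_distrib_left sum_distrib_right mult.assoc mult.left_commute)
  also have "\<dots> = avg P mu f + c * avg P mu g + d"
    using ps by (simp add: js sum_distrib_right[symmetric])
  finally show ?thesis .
qed

lemma avg_f_self: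
  fixes A :: "'i::finite \<Rightarrow> 'act::finite set" and P :: "'s::finite \<Rightarrow> ('i \<Rightarrow> 'act) \<Rightarrow> 's \<Rightarrow> real"
  assumes game: "valid_game A P" and erg: "\<forall>nu\<in>policies A. ergodic (Pmu P nu)" and mu: "mu \<in> policies A"
  shows "avg P mu (fmu beta P r mu) = Jobj beta P r mu"
proof -
  have "fmu beta P r mu = (\<lambda>s a. r s a + (- beta) * (r s a - eta P r mu)\<^sup>2 + 0)"
    by (simp add: fmu_def fun_eq_iff)
  then show ?thesis
    using avg_lin[OF game erg mu, of r "- beta" "\<lambda>s a. (r s a - eta P r mu)\<^sup>2" 0]
    by (simp add: Jobj_def zeta_def eta_def)
qed

lemma avg_f_other:
  fixes A :: "'i::finite \<Rightarrow> 'act::finite set" and P :: "'s::finite \<Rightarrow> ('i \<Rightarrow> 'act) \<Rightarrow> 's \<Rightarrow> real"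
  assumes game: "valid_game A P" and erg: "\<forall>nu\<in>policies A. ergodic (Pmu P nu)"
    and mu': "mu' \<in> policies A"
  shows "avg P mu' (fmu beta P r mu) = Jobj beta P r mu' - beta * (eta P r mu' - eta P r mu)\<^sup>2"
proof -
  define e where "e = eta P r mu" define e' where "e' = eta P r mu'"
  have "(\<lambda>s a. (r s a - e)\<^sup>2) = (\<lambda>s a. (r s a - e')\<^sup>2 + (2 * (e' - e)) * r s a + (- ((e' - e) * (e + e'))))"
    by (auto simp: fun_eq_iff algebra_simps power2_eq_square)
  then have sq: "avg P mu' (\<lambda>s a. (r s a - e)\<^sup>2) = zeta P r mu' + (e' - e)\<^sup>2"
    using avg_lin[OF game erg mu', of "\<lambda>s a. (r s a - e')\<^sup>2" "2 * (e' - e)" r "- ((e' - e) * (e + e'))"]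
    by (simp add: zeta_def e'_def eta_def[symmetric] algebra_simps power2_eq_square)
  have "fmu beta P r mu = (\<lambda>s a. r s a + (- beta) * (r s a - e)\<^sup>2 + 0)"
    by (simp add: fmu_def fun_eq_iff e_def)
  then have "avg P mu' (fmu beta P r mu) = e' - beta * (zeta P r mu' + (e' - e)\<^sup>2)"
    using avg_lin[OF game erg mu', of r "- beta" "\<lambda>s a. (r s a - e)\<^sup>2" 0] sq
    by (simp add: e'_def eta_def)
  then show ?thesis by (simp add: Jobj_def e_def e'_def algebra_simps)
qed

lemma dtv_bound:
  fixes A :: "'i::finite \<Rightarrow> 'act::finite set" and P :: "'s::finite \<Rightarrow> ('i \<Rightarrow> 'act) \<Rightarrow> 's \<Rightarrow> real"
  assumes game: "valid_game A P" and erg: "\<forall>nu\<in>policies A. ergodic (Pmu P nu)"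
    and mu: "mu \<in> policies A" and mu': "mu' \<in> policies A"
  shows "(\<Sum>j\<in>UNIV. \<bar>\<Sum>i\<in>UNIV. pi_mu P mu i * (Pmu P mu' i j - Pmu P mu i j)\<bar>) \<le> 2 * DTV P mu' mu"
proof -
  define D where "D i a = jpol mu' i a - jpol mu i a" for i a
  have pnn: "0 \<le> pi_mu P mu i" for i using pi_stat[OF game erg mu] by (simp add: is_stationary_def)
  have absDP: "\<bar>D i a * P i a j\<bar> = \<bar>D i a\<bar> * P i a j" for i a j
  proof (cases "a \<in> joint_actions A")
    case True
    then show ?thesis using game by (simp add: valid_game_def abs_mult)
  next
    case False
    then show ?thesis using jpol_zero[OF mu False] jpol_zero[OF mu' False] by (simp add: D_def)
  qed
  have DPs: "\<bar>D i a\<bar> * (\<Sum>j\<in>UNIV. P i a j) = \<bar>D i a\<bar>" for i a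
  proof (cases "a \<in> joint_actions A")
    case True
    then show ?thesis using game by (simp add: valid_game_def)
  next
    case False
    then show ?thesis using jpol_zero[OF mu False] jpol_zero[OF mu' False] by (simp add: D_def)
  qed
  have diff: "Pmu P mu' i j - Pmu P mu i j = (\<Sum>a\<in>UNIV. D i a * P i a j)" for i j
    unfolding Pmu_def D_def by (simp add: left_diff_distrib sum_subtractf)
  have "(\<Sum>j\<in>UNIV. \<bar>\<Sum>i\<in>UNIV. pi_mu P mu i * (Pmu P mu' i j - Pmu P mu i j)\<bar>)
      \<le> (\<Sum>j\<in>UNIV. \<Sum>i\<in>UNIV. pi_mu P mu i * (\<Sum>a\<in>UNIV. \<bar>D i a\<bar> * P i a j))"
  proof (rule sum_mono)
    fix j
    have "\<bar>\<Sum>i\<in>UNIV. pi_mu P mu i * (Pmu P mu' i j - Pmu P mu i j)\<bar>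
        \<le> (\<Sum>i\<in>UNIV. \<bar>pi_mu P mu i * (Pmu P mu' i j - Pmu P mu i j)\<bar>)" by (rule sum_abs)
    also have "\<dots> \<le> (\<Sum>i\<in>UNIV. pi_mu P mu i * (\<Sum>a\<in>UNIV. \<bar>D i a\<bar> * P i a j))"
    proof (rule sum_mono)
      fix i
      have "\<bar>Pmu P mu' i j - Pmu P mu i j\<bar> \<le> (\<Sum>a\<in>UNIV. \<bar>D i a * P i a j\<bar>)"
        unfolding diff by (rule sum_abs)
      then have "\<bar>Pmu P mu' i j - Pmu P mu i j\<bar> \<le> (\<Sum>a\<in>UNIV. \<bar>D i a\<bar> * P i a j)"
        by (simp add: absDP)
      then show "\<bar>pi_mu P mu i * (Pmu P mu' i j - Pmu P mu i j)\<bar> \<le> pi_mu P mu i * (\<Sum>a\<in>UNIV. \<bar>D i a\<bar> * P i a j)"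
        using pnn[of i] by (simp add: abs_mult mult_left_mono)
    qed
    finally show "\<bar>\<Sum>i\<in>UNIV. pi_mu P mu i * (Pmu P mu' i j - Pmu P mu i j)\<bar>
        \<le> (\<Sum>i\<in>UNIV. pi_mu P mu i * (\<Sum>a\<in>UNIV. \<bar>D i a\<bar> * P i a j))" .
  qed
  also have "\<dots> = (\<Sum>i\<in>UNIV. \<Sum>j\<in>UNIV. pi_mu P mu i * (\<Sum>a\<in>UNIV. \<bar>D i a\<bar> * P i a j))"
    by (rule sum.swap)
  also have "\<dots> = (\<Sum>i\<in>UNIV. pi_mu P mu i * (\<Sum>a\<in>UNIV. \<Sum>j\<in>UNIV. \<bar>D i a\<bar> * P i a j))"
    by (simp add: sum_distrib_left[symmetric] sum.swap[of _ UNIV UNIV])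
  also have "\<dots> = (\<Sum>i\<in>UNIV. pi_mu P mu i * (\<Sum>a\<in>UNIV. \<bar>D i a\<bar>))"
    by (simp add: sum_distrib_left[symmetric] DPs)
  also have "\<dots> = 2 * DTV P mu' mu"
    unfolding DTV_def D_def by (simp add: sum_distrib_left)
  finally show ?thesis .
qed

lemma w_eq:
  fixes M :: "'s::finite \<Rightarrow> 's \<Rightarrow> real"
  assumes st: "stoch M" and erg: "ergodic M" and ik: "i \<noteq> k"
  shows "Zf M k k - Zf M i k = stat_dist M k + (\<Sum>j\<in>UNIV. M i j * (Zf M k k - Zf M j k))"
proof -
  have "(\<Sum>j\<in>UNIV. M i j * (Zf M k k - Zf M j k)) = (\<Sum>j\<in>UNIV. M i j) * Zf M k k - (\<Sum>j\<in>UNIV. M i j * Zf M j k)"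
    by (simp add: right_diff_distrib sum_subtractf sum_distrib_right)
  also have "\<dots> = Zf M k k - (\<Sum>j\<in>UNIV. M i j * Zf M j k)" using stoch_rs[OF st, of i] by simp
  finally show ?thesis using Z_col[OF st erg, of i k] ik by simp
qed

lemma w_bound:
  fixes M Md :: "'s::finite \<Rightarrow> 's \<Rightarrow> real"
  assumes st: "stoch M" and erg: "ergodic M" and Mdnn: "\<forall>i j. 0 \<le> Md i j"
    and dl: "0 < dl" "dl \<le> 1" and low: "\<forall>t t'. 0 < Md t t' \<longrightarrow> dl \<le> M t t'"
    and reach: "0 < mpow Md n i0 k"
    and imax: "\<forall>j. Zf M k k - Zf M j k \<le> Zf M k k - Zf M i0 k"
  shows "Zf M k k - Zf M i0 k \<le> ((\<lambda>x. (1 + x) / dl) ^^ n) 0"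
proof -
  define w where "w i = Zf M k k - Zf M i k" for i
  define W where "W = w i0"
  define g where "g = (\<lambda>x::real. (1 + x) / dl)"
  have wnn: "0 \<le> w i" for i unfolding w_def using Z_diag[OF st erg, of i k] by simp
  have wk: "w k = 0" by (simp add: w_def)
  have wW: "w j \<le> W" for j using imax unfolding w_def W_def by blast
  have pk: "stat_dist M k \<le> 1"
  proof -
    have sp: "is_stationary M (stat_dist M)" by (rule stat_dist_stat[OF st erg])
    have "stat_dist M k \<le> (\<Sum>s\<in>UNIV. stat_dist M s)"
      by (rule member_le_sum) (use sp in \<open>auto simp: is_stationary_def\<close>)
    then show ?thesis using sp by (simp add: is_stationary_def)
  qed
  have gnn: "0 \<le> (g ^^ m) 0" for m
    by (induction m) (use dl in \<open>auto simp: g_def\<close>)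
  have gmono: "(g ^^ m) 0 \<le> (g ^^ Suc m) 0" for m
  proof -
    have "(g ^^ m) 0 \<le> 1 + (g ^^ m) 0" by simp
    also have "\<dots> \<le> (1 + (g ^^ m) 0) / dl"
      using dl gnn[of m] by (simp add: le_divide_eq mult_left_le)
    finally show ?thesis by (simp add: g_def)
  qed
  have step: "dl * (W - w s') \<le> 1 + (W - w t)" if tk: "t \<noteq> k" and Mt: "dl \<le> M t s'" for t s'
  proof -
    have nn: "\<forall>j. 0 \<le> M t j * (W - w j)" using stoch_nn[OF st] wW by simp
    have "M t s' * (W - w s') \<le> (\<Sum>j\<in>UNIV. M t j * (W - w j))"
      by (rule member_le_sum[of s' UNIV "\<lambda>j. M t j * (W - w j)"]) (use nn in auto)
    also have "\<dots> = W - (\<Sum>j\<in>UNIV. M t j * w j)"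
      using stoch_rs[OF st, of t] by (simp add: right_diff_distrib sum_subtractf sum_distrib_right[symmetric])
    also have "\<dots> = W - (w t - stat_dist M k)"
      using w_eq[OF st erg tk] unfolding w_def by simp
    finally have "M t s' * (W - w s') \<le> W - w t + stat_dist M k" by simp
    moreover have "dl * (W - w s') \<le> M t s' * (W - w s')"
      by (rule mult_right_mono[OF Mt]) (use wW in simp)
    ultimately show ?thesis using pk by linarith
  qed
  have claim: "\<forall>s. 0 < mpow Md m i0 s \<longrightarrow> W - w s \<le> (g ^^ m) 0" for m
  proof (induction m)
    case 0
    then show ?case by (simp add: W_def)
  next
    case (Suc m)
    show ?case
    proof (intro allI impI)
      fix s' assume "0 < mpow Md (Suc m) i0 s'"
      then obtain t where t1: "0 < mpow Md m i0 t" and t2: "0 < Md t s'"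
        using mpow_Suc_pos[OF Mdnn] by blast
      have IH: "W - w t \<le> (g ^^ m) 0" using Suc t1 by blast
      show "W - w s' \<le> (g ^^ Suc m) 0"
      proof (cases "t = k")
        case True
        then have "W \<le> (g ^^ m) 0" using IH wk by simp
        then show ?thesis using wnn[of s'] gmono[of m] by linarith
      next
        case False
        have "dl * (W - w s') \<le> 1 + (g ^^ m) 0"
          using step[OF False] low t2 IH by force
        then have "W - w s' \<le> (1 + (g ^^ m) 0) / dl"
          using dl by (simp add: le_divide_eq mult.commute)
        then show ?thesis by (simp add: g_def)
      qed
    qed
  qed
  have "W - w k \<le> (g ^^ n) 0" using claim reach by blast
  then show ?thesis using wk by (simp add: W_def w_def g_def)
qed

definition detpol :: "('s \<Rightarrow> 'i \<Rightarrow> 'act) \<Rightarrow> 'i \<Rightarrow> 's \<Rightarrow> 'act \<Rightarrow> real" where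
  "detpol d i s x = (if x = d s i then 1 else 0)"

lemma detpol_in:
  fixes A :: "'i::finite \<Rightarrow> 'act::finite set" and d :: "'s::finite \<Rightarrow> 'i \<Rightarrow> 'act"
  assumes "\<forall>s. d s \<in> joint_actions A"
  shows "detpol d \<in> policies A"
  unfolding policies_def
proof (intro CollectI allI conjI impI)
  fix i s x
  show "0 \<le> detpol d i s x" by (simp add: detpol_def)
  show "x \<notin> A i \<Longrightarrow> detpol d i s x = 0"
    using assms by (auto simp: detpol_def joint_actions_def)
  have "d s i \<in> A i" using assms by (simp add: joint_actions_def)
  then show "(\<Sum>x\<in>A i. detpol d i s x) = 1"
    unfolding detpol_def by (simp add: eq_commute[of _ "d s i"])
qed

lemma jpol_det:
  fixes d :: "'s \<Rightarrow> 'i::finite \<Rightarrow> 'act"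
  shows "jpol (detpol d) s a = (if a = d s then 1 else 0)"
proof (cases "a = d s")
  case True
  then show ?thesis by (simp add: jpol_def detpol_def)
next
  case False
  then obtain i where "a i \<noteq> d s i" by auto
  then have "detpol d i s (a i) = 0" by (simp add: detpol_def)
  then have "jpol (detpol d) s a = 0" unfolding jpol_def by (intro prod_zero) auto
  then show ?thesis using False by simp
qed

lemma Pmu_det:
  fixes d :: "'s::finite \<Rightarrow> 'i::finite \<Rightarrow> 'act::finite"
  shows "Pmu P (detpol d) s s' = P s (d s) s'"
proof -
  have "Pmu P (detpol d) s s' = (\<Sum>a\<in>UNIV. if a = d s then P s a s' else 0)"
    unfolding Pmu_def jpol_det by (rule sum.cong) auto
  then show ?thesis by simp
qed

lemma kemeny_bdd:
  fixes A :: "'i::finite \<Rightarrow> 'act::finite set" and P :: "'s::finite \<Rightarrow> ('i \<Rightarrow> 'act) \<Rightarrow> 's \<Rightarrow> real"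
  assumes game: "valid_game A P" and erg: "\<forall>nu\<in>policies A. ergodic (Pmu P nu)"
  shows "bdd_above (kemeny P ` policies A)"
proof -
  define pv where "pv = (\<lambda>(s, a, s'). if 0 < P s a s' then P s a s' else 1)"
  define pmin where "pmin = Min (range pv)"
  define cA where "cA = real (card (UNIV :: ('i \<Rightarrow> 'act) set))"
  define dl where "dl = min 1 (pmin / cA)"
  define g where "g = (\<lambda>x::real. (1 + x) / dl)"
  define Nf where "Nf = (\<lambda>(d :: 's \<Rightarrow> 'i \<Rightarrow> 'act, i :: 's, k :: 's).
      SOME n. 0 < n \<and> 0 < mpow (\<lambda>s s'. P s (d s) s') n i k)"
  define C where "C = Max (range (\<lambda>x. (g ^^ Nf x) 0))"
  have cA_pos: "0 < cA" unfolding cA_def by (simp add: card_gt_0_iff)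
  have pmin_pos: "0 < pmin"
  proof -
    have "pmin \<in> range pv" unfolding pmin_def by (rule Min_in) auto
    then show ?thesis by (auto simp: pv_def split: if_splits)
  qed
  have pmin_le: "0 < P s a s' \<Longrightarrow> pmin \<le> P s a s'" for s a s'
  proof -
    assume "0 < P s a s'"
    then have "pv (s, a, s') = P s a s'" by (simp add: pv_def)
    moreover have "pmin \<le> pv (s, a, s')" unfolding pmin_def by (rule Min_le) auto
    ultimately show ?thesis by simp
  qed
  have dl_pos: "0 < dl" unfolding dl_def using pmin_pos cA_pos by simp
  have dl_le1: "dl \<le> 1" unfolding dl_def by simp
  have C_ge: "(g ^^ Nf x) 0 \<le> C" for x unfolding C_def by (rule Max_ge) auto
  have bound: "kemeny P mu \<le> 1 + real (card (UNIV :: 's set)) * C" if mu: "mu \<in> policies A" for mu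
  proof -
    let ?M = "Pmu P mu"
    have st: "stoch ?M" by (rule Pmu_stoch[OF game mu])
    have eg: "ergodic ?M" using erg mu by blast
    define d where "d s = (SOME a. \<forall>b. jpol mu s b \<le> jpol mu s a)" for s
    have dmax0: "\<forall>b. jpol mu s b \<le> jpol mu s (d s)" for s
      unfolding d_def by (rule someI_ex[OF ex_argmax])
    have dmax: "jpol mu s b \<le> jpol mu s (d s)" for s b using dmax0 by blast
    have dge: "1 / cA \<le> jpol mu s (d s)" for s
    proof -
      have "1 = (\<Sum>a\<in>UNIV. jpol mu s a)" using jpol_sum[OF mu] by simp
      also have "\<dots> \<le> (\<Sum>a\<in>(UNIV :: ('i \<Rightarrow> 'act) set). jpol mu s (d s))" by (rule sum_mono) (rule dmax)
      also have "\<dots> = cA * jpol mu s (d s)" by (simp add: cA_def)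
      finally show ?thesis using cA_pos by (simp add: divide_le_eq mult.commute)
    qed
    have dj: "d s \<in> joint_actions A" for s
    proof (rule ccontr)
      assume "d s \<notin> joint_actions A"
      then have "jpol mu s (d s) = 0" by (rule jpol_zero[OF mu])
      then show False using dge[of s] cA_pos by simp
    qed
    have dpol: "detpol d \<in> policies A" by (rule detpol_in) (simp add: dj)
    define Md where "Md = (\<lambda>s s'. P s (d s) s')"
    have Md_eq: "Md = Pmu P (detpol d)" unfolding Md_def by (simp add: fun_eq_iff Pmu_det)
    have ergd: "ergodic Md" unfolding Md_eq using erg dpol by blast
    have Mdnn: "\<forall>i j. 0 \<le> Md i j" unfolding Md_eq using stoch_nn[OF Pmu_stoch[OF game dpol]] by blast
    have low: "\<forall>t t'. 0 < Md t t' \<longrightarrow> dl \<le> ?M t t'"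
    proof (intro allI impI)
      fix t t' assume pos: "0 < Md t t'"
      have "dl \<le> pmin / cA" unfolding dl_def by simp
      also have "\<dots> = (1 / cA) * pmin" by simp
      also have "\<dots> \<le> jpol mu t (d t) * P t (d t) t'"
        using dge[of t] pmin_le[of t "d t" t'] pos pmin_pos cA_pos jpol_nn[OF mu, of t "d t"] unfolding Md_def
        by (intro mult_mono) auto
      also have "\<dots> \<le> ?M t t'"
        unfolding Pmu_def
        by (rule member_le_sum[of "d t" UNIV "\<lambda>a. jpol mu t a * P t a t'"]) (simp_all add: jpol_P_nn[OF game mu])
      finally show "dl \<le> ?M t t'" .
    qed
    have termb: "Zf ?M k k - Zf ?M i k \<le> C" for i k
    proof -
      obtain i0 where i0: "\<forall>j. Zf ?M k k - Zf ?M j k \<le> Zf ?M k k - Zf ?M i0 k"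
        using ex_argmax[of "\<lambda>j. Zf ?M k k - Zf ?M j k"] by blast
      have "\<exists>n. 0 < n \<and> 0 < mpow Md n i0 k" using ergd unfolding ergodic_def by blast
      then have nN: "0 < mpow Md (Nf (d, i0, k)) i0 k"
        unfolding Nf_def Md_def by (simp, rule conjunct2[OF someI_ex])
      have "Zf ?M k k - Zf ?M i k \<le> Zf ?M k k - Zf ?M i0 k" using i0 by blast
      also have "\<dots> \<le> (g ^^ Nf (d, i0, k)) 0"
        unfolding g_def by (rule w_bound[OF st eg Mdnn dl_pos dl_le1 low nN i0])
      also have "\<dots> \<le> C" by (rule C_ge)
      finally show ?thesis .
    qed
    have "kemeny P mu - 1 = (\<Sum>k\<in>UNIV. Zf ?M k k - Zf ?M undefined k)"
      unfolding kemeny_def by (rule kemeny_row[OF st eg])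
    also have "\<dots> \<le> real (card (UNIV :: 's set)) * C"
      by (rule sum_bounded_above) (rule termb)
    finally show ?thesis by simp
  qed
  show ?thesis by (rule bdd_aboveI2[of _ _ "1 + real (card (UNIV :: 's set)) * C"]) (rule bound)
qed

lemma pdl_bound:
  fixes A :: "'i::finite \<Rightarrow> 'act::finite set" and P :: "'s::finite \<Rightarrow> ('i \<Rightarrow> 'act) \<Rightarrow> 's \<Rightarrow> real"
  assumes game: "valid_game A P" and erg: "\<forall>nu\<in>policies A. ergodic (Pmu P nu)"
    and mu: "mu \<in> policies A" and mu': "mu' \<in> policies A"
    and gb: "gbar = avg P mu g"
  shows "\<bar>(avg P mu' g - gbar) - surr P mu mu' (advantage P mu g gbar)\<bar>
     \<le> 2 * (kemeny_star A P - 1) * epsmax mu' (advantage P mu g gbar) * DTV P mu' mu"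
proof -
  let ?M = "Pmu P mu" and ?M' = "Pmu P mu'"
  let ?Ad = "advantage P mu g gbar"
  define G where "G s = (\<Sum>a\<in>UNIV. jpol mu' s a * ?Ad s a)" for s
  define eps where "eps = epsmax mu' ?Ad"
  define X where "X = (\<Sum>j\<in>UNIV. \<bar>\<Sum>i\<in>UNIV. stat_dist ?M i * (?M' i j - ?M i j)\<bar>)"
  have st: "stoch ?M" by (rule Pmu_stoch[OF game mu])
  have st': "stoch ?M'" by (rule Pmu_stoch[OF game mu'])
  have eg: "ergodic ?M" using erg mu by blast
  have eg': "ergodic ?M'" using erg mu' by blast
  have Gb: "\<forall>s. \<bar>G s\<bar> \<le> eps"
    unfolding G_def eps_def epsmax_def by (auto intro: Max_ge)
  have eps_nn: "0 \<le> eps" using Gb by (meson abs_ge_zero order_trans)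
  have lhs: "(avg P mu' g - gbar) - surr P mu mu' ?Ad
      = (\<Sum>s\<in>UNIV. stat_dist ?M' s * G s) - (\<Sum>s\<in>UNIV. stat_dist ?M s * G s)"
    using pdl[OF game erg mu mu' gb] unfolding surr_def G_def pi_mu_def by simp
  have b1: "\<bar>(avg P mu' g - gbar) - surr P mu mu' ?Ad\<bar> \<le> X * ((kemeny_chain ?M' - 1) * eps)"
    unfolding lhs X_def by (rule perturb[OF st eg st' eg' Gb])
  have X2: "X \<le> 2 * DTV P mu' mu"
    using dtv_bound[OF game erg mu mu'] unfolding X_def pi_mu_def .
  have Xnn: "0 \<le> X" unfolding X_def by (simp add: sum_nonneg)
  have Knn: "0 \<le> kemeny_chain ?M' - 1"
    unfolding kemeny_row[OF st' eg', of undefined]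
    by (rule sum_nonneg) (simp add: Z_diag[OF st' eg'])
  have Kle: "kemeny P mu' \<le> kemeny_star A P"
    unfolding kemeny_star_def by (rule cSUP_upper[OF mu' kemeny_bdd[OF game erg]])
  have "X * ((kemeny_chain ?M' - 1) * eps) \<le> (2 * DTV P mu' mu) * ((kemeny_chain ?M' - 1) * eps)"
    by (rule mult_right_mono[OF X2]) (use Knn eps_nn in simp)
  also have "\<dots> \<le> (2 * DTV P mu' mu) * ((kemeny_star A P - 1) * eps)"
  proof (rule mult_left_mono)
    show "(kemeny_chain ?M' - 1) * eps \<le> (kemeny_star A P - 1) * eps"
      using Kle eps_nn unfolding kemeny_def by (simp add: mult_right_mono)
    show "0 \<le> 2 * DTV P mu' mu" using Xnn X2 by linarith
  qed
  finally have b2: "X * ((kemeny_chain ?M' - 1) * eps) \<le> (2 * DTV P mu' mu) * ((kemeny_star A P - 1) * eps)" .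
  moreover have "(2 * DTV P mu' mu) * ((kemeny_star A P - 1) * eps)
      = 2 * (kemeny_star A P - 1) * epsmax mu' ?Ad * DTV P mu' mu" by (simp add: eps_def algebra_simps)
  ultimately show ?thesis using b1 by linarith
qed

theorem theorem6:
  fixes A :: "'i::finite \<Rightarrow> 'act::finite set"
    and P :: "'s::finite \<Rightarrow> ('i \<Rightarrow> 'act) \<Rightarrow> 's \<Rightarrow> real"
    and r :: "'s \<Rightarrow> ('i \<Rightarrow> 'act) \<Rightarrow> real"
    and beta :: real
    and mu mu' :: "'i \<Rightarrow> 's \<Rightarrow> 'act \<Rightarrow> real"
  assumes game: "valid_game A P"
    and erg: "\<forall>nu\<in>policies A. ergodic (Pmu P nu)"
    and beta: "0 \<le> beta"
    and mu: "mu \<in> policies A" and mu': "mu' \<in> policies A"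
  shows "let c = 2 * (kemeny_star A P - 1);
             D = DTV P mu' mu;
             Lf = surr P mu mu' (Adv_f beta P r mu);
             L = surr P mu mu' (Adv P r mu);
             eps_f = epsmax mu' (Adv_f beta P r mu);
             eps_eta = epsmax mu' (Adv P r mu);
             H = max 0 (max (L - c * eps_eta * D) (- L - c * eps_eta * D))
         in Jobj beta P r mu' - Jobj beta P r mu \<ge> Lf - c * eps_f * D + beta * H\<^sup>2"
proof -
  define c where "c = 2 * (kemeny_star A P - 1)"
  define D where "D = DTV P mu' mu"
  define Lf where "Lf = surr P mu mu' (Adv_f beta P r mu)"
  define L where "L = surr P mu mu' (Adv P r mu)"
  define ef where "ef = epsmax mu' (Adv_f beta P r mu)"
  define ee where "ee = epsmax mu' (Adv P r mu)"
  define H where "H = max 0 (max (L - c * ee * D) (- L - c * ee * D))"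
  define e where "e = eta P r mu" define e' where "e' = eta P r mu'"
  have bf: "\<bar>(avg P mu' (fmu beta P r mu) - Jobj beta P r mu) - Lf\<bar> \<le> c * ef * D"
    using pdl_bound[OF game erg mu mu', of "Jobj beta P r mu" "fmu beta P r mu"]
      avg_f_self[OF game erg mu, of beta r]
    unfolding Lf_def c_def ef_def D_def Adv_f_def by simp
  have be: "\<bar>(e' - e) - L\<bar> \<le> c * ee * D"
    using pdl_bound[OF game erg mu mu', of "eta P r mu" r]
    unfolding L_def c_def ee_def D_def Adv_def e_def e'_def eta_def by simp
  have fo: "avg P mu' (fmu beta P r mu) = Jobj beta P r mu' - beta * (e' - e)\<^sup>2"
    using avg_f_other[OF game erg mu', of beta r mu] unfolding e_def e'_def .
  have H0: "0 \<le> H" unfolding H_def by simp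
  have be1: "e' - e - L \<le> c * ee * D" "L - (e' - e) \<le> c * ee * D" using be by (simp_all add: abs_le_iff)
  have H1: "H \<le> \<bar>e' - e\<bar>" unfolding H_def max.bounded_iff
    using be1 abs_ge_self[of "e' - e"] abs_ge_minus_self[of "e' - e"] by (intro conjI) linarith+
  have "H\<^sup>2 \<le> (e' - e)\<^sup>2"
    using power_mono[OF H1 H0, of 2] by simp
  then have "beta * H\<^sup>2 \<le> beta * (e' - e)\<^sup>2" by (rule mult_left_mono[OF _ beta])
  then have "Jobj beta P r mu' - Jobj beta P r mu \<ge> Lf - c * ef * D + beta * H\<^sup>2"
    using bf fo by (simp add: abs_le_iff)
  then show ?thesis
    unfolding Let_def c_def D_def Lf_def L_def ef_def ee_def H_def[unfolded c_def D_def L_def ee_def]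
    by (simp add: c_def D_def L_def ee_def H_def)
qed

end
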